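(* Let $(n,t)\in\{(9,11),(10,13),(11,16)\}$. Then every $n$-vertex graph containing at least $t$ triangles contains a copy of $\widehat P_4$ as a (not necessarily induced) subgraph. Equivalently, $\mathrm{ex}(9,K_3,\widehat P_4)\le 10$, $\mathrm{ex}(10,K_3,\widehat P_4)\le 12$ and $\mathrm{ex}(11,K_3,\widehat P_4)\le 15$.
   Context: All graphs are finite and simple. $P_4$ denotes the path on $4$ vertices. For a graph $G$, its suspension $\widehat G$ is the graph obtained from $G$ by adding one new vertex and joining it to every vertex of $G$. $\mathrm{ex}(n,K_3,H)$ denotes the maximum number of triangles in an $n$-vertex graph containing no subgraph isomorphic to $H$. *)

theory Defs
  imports Main
begin

definition simple_graph :: "'a set \<Rightarrow> 'a set set \<Rightarrow> bool" where
  "simple_graph V E \<longleftrightarrow> finite V \<and> (\<forall>e\<in>E. e \<subseteq> V \<and> card e = 2)"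

definition triangles :: "'a set \<Rightarrow> 'a set set \<Rightarrow> 'a set set" where
  "triangles V E = {T. T \<subseteq> V \<and> card T = 3 \<and> (\<forall>x\<in>T. \<forall>y\<in>T. x \<noteq> y \<longrightarrow> {x, y} \<in> E)}"

text \<open>The suspension of P4 (a "gem"): vertices 0 (apex), 1,2,3,4 (path 1-2-3-4).\<close>
definition susp_P4_edges :: "nat set set" where
  "susp_P4_edges = {{0,1},{0,2},{0,3},{0,4},{1,2},{2,3},{3,4}}"

definition contains_subgraph :: "'b set \<Rightarrow> 'b set set \<Rightarrow> 'a set \<Rightarrow> 'a set set \<Rightarrow> bool" where
  "contains_subgraph VH EH V E \<longleftrightarrow>
     (\<exists>f. inj_on f VH \<and> f ` VH \<subseteq> V \<and> (\<forall>e\<in>EH. f ` e \<in> E))"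

end

theory Submission
  imports Defs
begin

locale gemfree =
  fixes V :: "'a set" and E :: "'a set set"
  assumes sg: "simple_graph V E"
  and nogem: "\<not> contains_subgraph {0..4::nat} susp_P4_edges V E"
begin

definition adj where "adj x y \<longleftrightarrow> {x,y} \<in> E"

lemma finV: "finite V" using sg by (simp add: simple_graph_def)

lemma edge_sub: "e \<in> E \<Longrightarrow> e \<subseteq> V \<and> card e = 2" using sg by (simp add: simple_graph_def)

lemma adj_sym: "adj x y = adj y x" by (simp add: adj_def insert_commute)

lemma adj_ne: "adj x y \<Longrightarrow> x \<noteq> y"
  using edge_sub[of "{x,y}"] by (auto simp: adj_def)

lemma adj_V: "adj x y \<Longrightarrow> x \<in> V \<and> y \<in> V"
  using edge_sub[of "{x,y}"] by (auto simp: adj_def)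

lemma gem:
  assumes "adj v a" "adj v b" "adj v c" "adj v d" "adj a b" "adj b c" "adj c d"
    "distinct [v,a,b,c,d]"
  shows False
proof -
  define f where "f = (\<lambda>i::nat. if i=0 then v else if i=1 then a else if i=2 then b else if i=3 then c else d)"
  have dom: "{0..4::nat} = {0,1,2,3,4}" by auto
  have "inj_on f {0..4}" using assms(8) unfolding dom f_def inj_on_def by auto
  moreover have "f ` {0..4} \<subseteq> V" using assms(1-4) adj_V unfolding dom f_def by auto
  moreover have "\<forall>e\<in>susp_P4_edges. f ` e \<in> E"
    using assms(1-7) unfolding susp_P4_edges_def f_def adj_def by (auto simp: insert_commute)
  ultimately have "contains_subgraph {0..4::nat} susp_P4_edges V E"
    unfolding contains_subgraph_def by blast
  with nogem show False by simp
qed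

definition Tri where "Tri = triangles V E"

lemma tri_mem: "\<tau> \<in> Tri \<longleftrightarrow> (\<exists>x y z. \<tau> = {x,y,z} \<and> adj x y \<and> adj y z \<and> adj x z)"
proof
  assume "\<tau> \<in> Tri"
  hence t: "\<tau> \<subseteq> V" "card \<tau> = 3" "\<forall>x\<in>\<tau>. \<forall>y\<in>\<tau>. x \<noteq> y \<longrightarrow> {x, y} \<in> E"
    by (auto simp: Tri_def triangles_def)
  from t(2) obtain x y z where "\<tau> = {x,y,z}" "x\<noteq>y" "y\<noteq>z" "x\<noteq>z" by (auto simp: card_3_iff)
  with t(3) show "\<exists>x y z. \<tau> = {x,y,z} \<and> adj x y \<and> adj y z \<and> adj x z" by (auto simp: adj_def)
next
  assume "\<exists>x y z. \<tau> = {x,y,z} \<and> adj x y \<and> adj y z \<and> adj x z"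
  then obtain x y z where h: "\<tau> = {x,y,z}" "adj x y" "adj y z" "adj x z" by blast
  have "card \<tau> = 3" using h adj_ne by auto
  moreover have "\<tau> \<subseteq> V" using h adj_V by auto
  moreover have "\<forall>u\<in>\<tau>. \<forall>w\<in>\<tau>. u \<noteq> w \<longrightarrow> {u, w} \<in> E"
    using h by (auto simp: adj_def insert_commute)
  ultimately show "\<tau> \<in> Tri" by (simp add: Tri_def triangles_def)
qed

lemma tri_I: "adj x y \<Longrightarrow> adj y z \<Longrightarrow> adj x z \<Longrightarrow> {x,y,z} \<in> Tri"
  using tri_mem by blast

lemma tri_adj: "\<tau> \<in> Tri \<Longrightarrow> x \<in> \<tau> \<Longrightarrow> y \<in> \<tau> \<Longrightarrow> x \<noteq> y \<Longrightarrow> adj x y"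
  by (auto simp: Tri_def triangles_def adj_def)

lemma tri_card: "\<tau> \<in> Tri \<Longrightarrow> card \<tau> = 3" by (auto simp: Tri_def triangles_def)

lemma finTri: "finite Tri"
proof -
  have "Tri \<subseteq> Pow V" by (auto simp: Tri_def triangles_def)
  thus ?thesis using finV by (meson finite_Pow_iff finite_subset)
qed

lemma tri_third:
  assumes "\<tau> \<in> Tri" "x \<in> \<tau>" "y \<in> \<tau>" "x \<noteq> y"
  shows "\<exists>z. \<tau> = {x,y,z} \<and> z \<noteq> x \<and> z \<noteq> y \<and> adj x z \<and> adj y z"
proof -
  have "card (\<tau> - {x,y}) = 1" using tri_card[OF assms(1)] assms(2-4)
    by (simp add: card_Diff_subset)
  then obtain z where z: "\<tau> - {x,y} = {z}" by (auto simp: card_1_singleton_iff)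
  hence "\<tau> = {x,y,z}" using assms(2,3) by auto
  moreover have "z \<noteq> x" "z \<noteq> y" using z by auto
  ultimately show ?thesis using tri_adj[OF assms(1)] by auto
qed

end


lemma tri_mono: "W' \<subseteq> W \<Longrightarrow> F' \<subseteq> F \<Longrightarrow> triangles W' F' \<subseteq> triangles W F"
  unfolding triangles_def by blast

lemma card_edges_at:
  assumes fin: "finite W" and F: "F \<subseteq> {e. e \<subseteq> W \<and> card e = 2}" and x: "x \<in> W"
  shows "card {e\<in>F. x \<in> e} = card {z\<in>W. {x,z} \<in> F}"
proof -
  have "{e\<in>F. x \<in> e} = (\<lambda>z. {x,z}) ` {z\<in>W. {x,z} \<in> F}"
  proof
    show "{e \<in> F. x \<in> e} \<subseteq> (\<lambda>z. {x, z}) ` {z \<in> W. {x, z} \<in> F}"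
    proof
      fix e assume e: "e \<in> {e \<in> F. x \<in> e}"
      hence "card e = 2" "e \<subseteq> W" using F by auto
      then obtain a b where ab: "e = {a,b}" "a \<noteq> b" by (meson card_2_iff)
      show "e \<in> (\<lambda>z. {x, z}) ` {z \<in> W. {x, z} \<in> F}"
      proof (cases "a = x")
        case True
        thus ?thesis using ab e \<open>e \<subseteq> W\<close> by auto
      next
        case False
        hence "b = x" using ab e by auto
        hence "e = {x,a}" using ab by auto
        thus ?thesis using e \<open>e \<subseteq> W\<close> by auto
      qed
    qed
  qed auto
  moreover have "inj_on (\<lambda>z. {x,z}) {z\<in>W. {x,z} \<in> F}"
  proof (rule inj_onI)
    fix z1 z2 assume h: "z1 \<in> {z\<in>W. {x,z} \<in> F}" "z2 \<in> {z\<in>W. {x,z} \<in> F}" "{x,z1} = {x,z2}"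
    have "card {x,z1} = 2" "card {x,z2} = 2" using h F by auto
    hence "z1 \<noteq> x" "z2 \<noteq> x" by auto
    thus "z1 = z2" using h(3) by (metis doubleton_eq_iff)
  qed
  ultimately show ?thesis by (simp add: card_image)
qed

lemma mantel:
  assumes "finite W" "F \<subseteq> {e. e \<subseteq> W \<and> card e = 2}"
    "\<forall>e\<in>F. card {\<tau> \<in> triangles W F. e \<subseteq> \<tau>} \<le> 1"
  shows "4 * card F \<le> card W ^ 2 + 4 * card (triangles W F)"
  using assms
proof (induction "card W" arbitrary: W F rule: less_induct)
  case less
  show ?case
  proof (cases "F = {}")
    case True thus ?thesis by simp
  next
    case False
    then obtain e where e: "e \<in> F" by blast
    hence "e \<subseteq> W" "card e = 2" using less.prems by auto
    then obtain x y where xy: "e = {x,y}" "x \<noteq> y" by (meson card_2_iff)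
    have xW: "x \<in> W" "y \<in> W" using xy \<open>e \<subseteq> W\<close> by auto
    define W' where "W' = W - {x,y}"
    define F' where "F' = {e\<in>F. e \<subseteq> W'}"
    have finW': "finite W'" using less.prems(1) by (simp add: W'_def)
    have "card {x,y} \<le> card W" using xW less.prems(1) by (intro card_mono) auto
    hence "card W \<ge> 2" using xy by simp
    hence cW': "card W' + 2 = card W" using xW xy less.prems(1) unfolding W'_def
      by (simp add: card_Diff_subset)
    have F'sub: "F' \<subseteq> {e. e \<subseteq> W' \<and> card e = 2}" using less.prems(2) by (auto simp: F'_def)
    have trisub: "triangles W' F' \<subseteq> triangles W F"
      by (rule tri_mono) (auto simp: W'_def F'_def)
    have finF: "finite F"
    proof -
      have "F \<subseteq> Pow W" using less.prems(2) by auto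
      thus ?thesis using less.prems(1) by (meson finite_Pow_iff finite_subset)
    qed
    have finT: "finite (triangles W F)"
    proof -
      have "triangles W F \<subseteq> Pow W" by (auto simp: triangles_def)
      thus ?thesis using less.prems(1) by (meson finite_Pow_iff finite_subset)
    qed
    have F'hyp: "\<forall>e\<in>F'. card {\<tau> \<in> triangles W' F'. e \<subseteq> \<tau>} \<le> 1"
    proof
      fix e' assume "e' \<in> F'"
      hence "e' \<in> F" by (simp add: F'_def)
      have "{\<tau> \<in> triangles W' F'. e' \<subseteq> \<tau>} \<subseteq> {\<tau> \<in> triangles W F. e' \<subseteq> \<tau>}" using trisub by blast
      hence "card {\<tau> \<in> triangles W' F'. e' \<subseteq> \<tau>} \<le> card {\<tau> \<in> triangles W F. e' \<subseteq> \<tau>}"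
        using finT by (intro card_mono) auto
      thus "card {\<tau> \<in> triangles W' F'. e' \<subseteq> \<tau>} \<le> 1" using less.prems(3) \<open>e' \<in> F\<close> by fastforce
    qed
    have IH: "4 * card F' \<le> card W' ^ 2 + 4 * card (triangles W' F')"
      using less.hyps[of W' F'] cW' finW' F'sub F'hyp by simp
    define Nx where "Nx = {z\<in>W. {x,z} \<in> F}"
    define Ny where "Ny = {z\<in>W. {y,z} \<in> F}"
    define P where "P = {e\<in>F. x \<in> e}"
    define Q where "Q = {e\<in>F. y \<in> e}"
    have cP: "card P = card Nx" unfolding P_def Nx_def using card_edges_at[OF less.prems(1,2) xW(1)] .
    have cQ: "card Q = card Ny" unfolding Q_def Ny_def using card_edges_at[OF less.prems(1,2) xW(2)] .
    have FF': "F - F' = P \<union> Q"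
    proof
      show "F - F' \<subseteq> P \<union> Q" using less.prems(2) by (auto simp: F'_def W'_def P_def Q_def)
      show "P \<union> Q \<subseteq> F - F'" by (auto simp: F'_def W'_def P_def Q_def)
    qed
    have finPQ: "finite P" "finite Q" using finF by (auto simp: P_def Q_def)
    have "{x,y} \<in> P \<inter> Q" using e xy by (auto simp: P_def Q_def)
    hence "card (P \<inter> Q) \<ge> 1" using finPQ by (metis One_nat_def card_0_eq empty_iff finite_Int less_one not_le)
    hence cPQ: "card (P \<union> Q) + 1 \<le> card P + card Q" using card_Un_Int[OF finPQ] by simp
    have finN: "finite Nx" "finite Ny" using less.prems(1) by (auto simp: Nx_def Ny_def)
    have "card (Nx \<union> Ny) \<le> card W" using less.prems(1) by (intro card_mono) (auto simp: Nx_def Ny_def)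
    hence cN: "card Nx + card Ny \<le> card W + card (Nx \<inter> Ny)" using card_Un_Int[OF finN] by simp
    define C where "C = Nx \<inter> Ny"
    define g where "g = (\<lambda>z. {x,y,z})"
    have Cne: "z \<in> C \<Longrightarrow> z \<noteq> x \<and> z \<noteq> y" for z
    proof -
      assume "z \<in> C"
      hence "{x,z} \<in> F" "{y,z} \<in> F" by (auto simp: C_def Nx_def Ny_def)
      hence "card {x,z} = 2" "card {y,z} = 2" using less.prems(2) by auto
      thus ?thesis by auto
    qed
    have gtri: "g z \<in> triangles W F" if "z \<in> C" for z
    proof -
      have z: "z \<in> W" "{x,z} \<in> F" "{y,z} \<in> F" using that by (auto simp: C_def Nx_def Ny_def)
      have "card {x,y,z} = 3" using Cne[OF that] xy by auto
      moreover have "\<forall>a\<in>{x,y,z}. \<forall>b\<in>{x,y,z}. a \<noteq> b \<longrightarrow> {a,b} \<in> F"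
        using z e xy by (auto simp: insert_commute)
      ultimately show ?thesis using z xW by (auto simp: triangles_def g_def)
    qed
    have ginj: "inj_on g C"
    proof (rule inj_onI)
      fix a b assume "a \<in> C" "b \<in> C" "g a = g b"
      thus "a = b" using Cne[OF \<open>a\<in>C\<close>] Cne[OF \<open>b\<in>C\<close>] by (auto simp: g_def insert_eq_iff)
    qed
    have "g ` C \<subseteq> {\<tau> \<in> triangles W F. e \<subseteq> \<tau>}" using gtri xy by (auto simp: g_def)
    hence "card (g ` C) \<le> card {\<tau> \<in> triangles W F. e \<subseteq> \<tau>}" using finT by (intro card_mono) auto
    hence cC: "card C \<le> 1" using less.prems(3) e card_image[OF ginj] by fastforce
    have disj: "triangles W' F' \<inter> g ` C = {}" by (auto simp: g_def triangles_def W'_def)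
    have "triangles W' F' \<union> g ` C \<subseteq> triangles W F" using trisub gtri by blast
    hence "card (triangles W' F' \<union> g ` C) \<le> card (triangles W F)" using finT by (intro card_mono) auto
    moreover have "finite (triangles W' F')" using finT trisub finite_subset by blast
    ultimately have cT: "card (triangles W' F') + card C \<le> card (triangles W F)"
      using card_Un_disjoint[OF _ _ disj] card_image[OF ginj] finN by (simp add: C_def)
    have "F' \<subseteq> F" by (auto simp: F'_def)
    hence cF: "card F = card F' + card (P \<union> Q)"
      using FF' finF by (metis card_Diff_subset card_mono le_add_diff_inverse finite_subset)
    have "4 * card F + 4 \<le> card W' ^ 2 + 4 * card (triangles W' F') + 4 * (card P + card Q)"
      using cF IH cPQ by (simp only: distrib_left)
    also have "\<dots> \<le> card W' ^ 2 + 4 * card (triangles W' F') + 4 * (card W + card C)"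
      using cP cQ cN by (simp add: C_def)
    finally have "4 * card F + 4 \<le> card W' ^ 2 + 4 * card W + 4 * (card (triangles W' F') + card C)"
      by simp
    also have "\<dots> \<le> card W' ^ 2 + 4 * card W + 4 * card (triangles W F)" using cT by simp
    finally have "4 * card F + 4 \<le> card W' ^ 2 + 4 * card W + 4 * card (triangles W F)" .
    moreover have "card W' ^ 2 + 4 * card W = card W ^ 2 + 4"
    proof -
      have "card W = card W' + 2" using cW' by simp
      thus ?thesis by (simp add: power2_eq_square algebra_simps)
    qed
    ultimately show ?thesis by linarith
  qed
qed



context gemfree begin

definition L0 where "L0 = {e\<in>E. card {\<tau>\<in>Tri. e \<subseteq> \<tau>} = 1}"
definition TH where "TH = {\<tau>\<in>Tri. \<exists>e\<in>L0. e \<subseteq> \<tau>}"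
definition K4s where "K4s = {A. A \<subseteq> V \<and> card A = 4 \<and> (\<forall>x\<in>A. \<forall>y\<in>A. x \<noteq> y \<longrightarrow> adj x y)}"
definition Nb where "Nb u = {y\<in>V. adj u y}"

lemma light_unique:
  assumes "e \<in> L0" "\<tau>1 \<in> Tri" "\<tau>2 \<in> Tri" "e \<subseteq> \<tau>1" "e \<subseteq> \<tau>2" shows "\<tau>1 = \<tau>2"
proof -
  have "card {\<tau>\<in>Tri. e \<subseteq> \<tau>} = 1" using assms(1) by (simp add: L0_def)
  then obtain t where eq: "{\<tau>\<in>Tri. e \<subseteq> \<tau>} = {t}" by (metis One_nat_def card_1_singletonE)
  have "\<tau>1 \<in> {\<tau>\<in>Tri. e \<subseteq> \<tau>}" "\<tau>2 \<in> {\<tau>\<in>Tri. e \<subseteq> \<tau>}" using assms by simp_all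
  thus ?thesis unfolding eq by simp
qed

lemma light_E: "e \<in> L0 \<Longrightarrow> e \<in> E" by (simp add: L0_def)

lemma light_has_tri: "e \<in> L0 \<Longrightarrow> \<exists>\<tau>\<in>Tri. e \<subseteq> \<tau>"
proof -
  assume "e \<in> L0"
  hence "card {\<tau>\<in>Tri. e \<subseteq> \<tau>} = 1" by (simp add: L0_def)
  then obtain t where "{\<tau>\<in>Tri. e \<subseteq> \<tau>} = {t}" by (metis One_nat_def card_1_singletonE)
  thus ?thesis by blast
qed

lemma other_vertex:
  assumes "adj x y" "adj x z" "adj y z" "{x,y} \<notin> L0"
  shows "\<exists>w. adj x w \<and> adj y w \<and> w \<noteq> z"
proof -
  let ?S = "{\<tau>\<in>Tri. {x,y} \<subseteq> \<tau>}"
  have t: "{x,y,z} \<in> Tri" using assms by (intro tri_I) (auto simp: adj_sym)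
  have fin: "finite ?S" using finTri by simp
  have "{x,y,z} \<in> ?S" using t by auto
  moreover have "card ?S \<noteq> 1" using assms(1,4) by (auto simp: L0_def adj_def)
  ultimately have "?S \<noteq> {{x,y,z}}" by (metis (no_types, lifting) One_nat_def card.empty card.insert empty_iff finite.emptyI)
  with \<open>{x,y,z} \<in> ?S\<close> obtain t' where t': "t' \<in> ?S" "t' \<noteq> {x,y,z}" by blast
  then obtain w where w: "t' = {x,y,w}" "adj x w" "adj y w"
    using tri_third[of t' x y] adj_ne[OF assms(1)] by auto
  hence "w \<noteq> z" using t' by auto
  thus ?thesis using w by blast
qed

lemma L1:
  assumes "adj x y" "adj y z" "adj x z" "{x,z} \<in> L0"
  shows "{x,y} \<in> L0 \<or> {y,z} \<in> L0"
proof (rule ccontr)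
  assume "\<not> ?thesis"
  hence n1: "{x,y} \<notin> L0" and n2: "{y,z} \<notin> L0" by auto
  obtain w where w: "adj x w" "adj y w" "w \<noteq> z" using other_vertex[OF assms(1,3,2) n1] by blast
  obtain u where u: "adj y u" "adj z u" "u \<noteq> x"
    using other_vertex[OF assms(2) _ _ n2, of x] assms by (auto simp: adj_sym)
  have "w \<noteq> u"
  proof
    assume "w = u"
    have "{x,z,w} \<in> Tri" using w u \<open>w = u\<close> assms by (intro tri_I) (auto simp: adj_sym)
    moreover have "{x,z,y} \<in> Tri" using assms by (intro tri_I) (auto simp: adj_sym)
    ultimately have "{x,z,w} = {x,z,y}" using light_unique[OF assms(4)] by blast
    moreover have "w \<noteq> y" using w adj_ne by blast
    moreover have "w \<noteq> x" "w \<noteq> z" using w adj_ne by auto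
    ultimately show False by auto
  qed
  show False
    apply (rule gem[of y w x z u])
    using w u assms \<open>w \<noteq> u\<close> adj_ne by (auto simp: adj_sym)
qed

lemma K4_ex:
  assumes "A \<in> K4s" "a \<in> A" "b \<in> A" "a \<noteq> b"
  shows "\<exists>c d. A = {a,b,c,d} \<and> distinct [a,b,c,d]"
proof -
  have "card (A - {a,b}) = 2" using assms by (simp add: K4s_def card_Diff_subset)
  then obtain c d where "A - {a,b} = {c,d}" "c \<noteq> d" by (meson card_2_iff)
  hence cd: "c \<in> A" "d \<in> A" "c \<notin> {a,b}" "d \<notin> {a,b}" by blast+
  have "A = insert a (insert b (A - {a,b}))" using assms(2,3) by blast
  hence "A = {a,b,c,d}" using \<open>A - {a,b} = {c,d}\<close> by simp
  moreover have "distinct [a,b,c,d]" using cd \<open>c \<noteq> d\<close> assms(4) by auto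
  ultimately show ?thesis by blast
qed

lemma K4_fin: "A \<in> K4s \<Longrightarrow> finite A"
  by (simp add: K4s_def card_ge_0_finite)

lemma tri_fin: "\<tau> \<in> Tri \<Longrightarrow> finite \<tau>"
  by (metis card.infinite tri_card zero_neq_numeral)

lemma clique4:
  assumes "adj a b" "adj a c" "adj a d" "adj b c" "adj b d" "adj c d"
  shows "{a,b,c,d} \<in> K4s"
proof -
  have s: "adj b a" "adj c a" "adj d a" "adj c b" "adj d b" "adj d c" using assms adj_sym by blast+
  have ne: "a \<noteq> b" "a \<noteq> c" "a \<noteq> d" "b \<noteq> c" "b \<noteq> d" "c \<noteq> d" using assms adj_ne by blast+
  have "card {a,b,c,d} = 4" using ne by simp
  moreover have "{a,b,c,d} \<subseteq> V" using assms adj_V by blast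
  moreover have "\<forall>x\<in>{a,b,c,d}. \<forall>y\<in>{a,b,c,d}. x \<noteq> y \<longrightarrow> adj x y"
    using assms s by blast
  ultimately show ?thesis by (simp add: K4s_def)
qed

lemma K4_adj: "A \<in> K4s \<Longrightarrow> x \<in> A \<Longrightarrow> y \<in> A \<Longrightarrow> x \<noteq> y \<Longrightarrow> adj x y"
  by (simp add: K4s_def)

lemma K1:
  assumes "A \<in> K4s" "u \<notin> A" "a \<in> A" "b \<in> A" "a \<noteq> b" "adj u a" "adj u b"
  shows False
proof -
  obtain c d where cd: "A = {a,b,c,d}" "distinct [a,b,c,d]" using K4_ex[OF assms(1,3,4,5)] by blast
  have "\<And>x y. x \<in> A \<Longrightarrow> y \<in> A \<Longrightarrow> x \<noteq> y \<Longrightarrow> adj x y" using K4_adj[OF assms(1)] by blast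
  hence "adj a b" "adj a c" "adj a d" "adj b c" "adj c d" using cd by auto
  thus False
    apply (intro gem[of a u b c d])
    using assms cd by (auto simp: adj_sym)
qed

lemma K1card: assumes "A \<in> K4s" "u \<notin> A" shows "card (Nb u \<inter> A) \<le> 1"
proof -
  have "finite (Nb u \<inter> A)" using K4_fin[OF assms(1)] by simp
  thus ?thesis using K1[OF assms] by (auto simp: Nb_def card_le_Suc0_iff_eq)
qed

lemma K2: assumes "A \<in> K4s" "B \<in> K4s" "A \<noteq> B" shows "card (A \<inter> B) \<le> 1"
proof (rule ccontr)
  assume "\<not> ?thesis"
  moreover have "finite (A \<inter> B)" using K4_fin[OF assms(1)] by simp
  ultimately obtain a b where ab: "a \<in> A \<inter> B" "b \<in> A \<inter> B" "a \<noteq> b"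
    by (auto simp: card_le_Suc0_iff_eq)
  have "card A = 4" "card B = 4" using assms by (auto simp: K4s_def)
  have "\<not> B \<subseteq> A"
  proof
    assume "B \<subseteq> A"
    hence "B = A" using \<open>card A = 4\<close> \<open>card B = 4\<close> card_subset_eq
      by (metis card.infinite zero_neq_numeral)
    thus False using assms(3) by simp
  qed
  then obtain c where c: "c \<in> B" "c \<notin> A" by blast
  have "c \<noteq> a" "c \<noteq> b" using c ab by auto
  thus False using K1[OF assms(1) c(2), of a b] ab c K4_adj[OF assms(2)] by (auto simp: adj_sym)
qed

lemma KX:
  assumes "A \<in> K4s" "B \<in> K4s" "p \<in> A" "p \<in> B" "x \<in> A" "x \<notin> B" "y \<in> B" "y \<notin> A" "adj x y"
  shows False
proof -
  have "A \<noteq> B" using assms by blast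
  have "x \<noteq> p" "y \<noteq> p" using assms by auto
  obtain x2 x3 where xx: "A = {p,x,x2,x3}" "distinct [p,x,x2,x3]" using K4_ex[OF assms(1,3,5)] \<open>x \<noteq> p\<close> by metis
  obtain y2 y3 where yy: "B = {p,y,y2,y3}" "distinct [p,y,y2,y3]" using K4_ex[OF assms(2,4,7)] \<open>y \<noteq> p\<close> by metis
  have "y2 \<notin> A"
  proof
    assume "y2 \<in> A"
    hence "{p,y2} \<subseteq> A \<inter> B" using assms yy by auto
    hence "card {p,y2} \<le> card (A \<inter> B)" using finV assms(1) by (intro card_mono) (auto simp: K4s_def intro: finite_subset)
    thus False using K2[OF assms(1,2) \<open>A\<noteq>B\<close>] yy by auto
  qed
  have "x2 \<notin> B"
  proof
    assume "x2 \<in> B"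
    hence "{p,x2} \<subseteq> A \<inter> B" using assms xx by auto
    hence "card {p,x2} \<le> card (A \<inter> B)" using finV assms(1) by (intro card_mono) (auto simp: K4s_def intro: finite_subset)
    thus False using K2[OF assms(1,2) \<open>A\<noteq>B\<close>] xx by auto
  qed
  have a: "adj p x2" "adj p x" "adj x2 x" using K4_adj[OF assms(1)] xx by auto
  have b: "adj p y" "adj p y2" "adj y y2" using K4_adj[OF assms(2)] yy by auto
  show False
    apply (rule gem[of p x2 x y y2])
    using a b assms \<open>y2 \<notin> A\<close> \<open>x2 \<notin> B\<close> xx yy by auto
qed

lemma KE: assumes "A \<in> K4s" "x \<in> A" "y \<in> A" "x \<noteq> y" shows "{x,y} \<notin> L0"
proof
  assume l: "{x,y} \<in> L0"
  obtain c d where cd: "A = {x,y,c,d}" "distinct [x,y,c,d]" using K4_ex[OF assms] by blast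
  have "{x,y,c} \<in> Tri" "{x,y,d} \<in> Tri" using K4_adj[OF assms(1)] cd by (auto intro!: tri_I)
  hence "{x,y,c} = {x,y,d}" using light_unique[OF l] by blast
  thus False using cd by auto
qed

lemma edge2: "e \<in> E \<Longrightarrow> \<exists>x y. e = {x,y} \<and> x \<noteq> y \<and> adj x y"
  using edge_sub[of e] by (auto simp: card_2_iff adj_def)

lemma HK: assumes "\<tau> \<in> TH" "A \<in> K4s" shows "card (\<tau> \<inter> A) \<le> 1"
proof (rule ccontr)
  assume "\<not> ?thesis"
  moreover have "finite (\<tau> \<inter> A)" using K4_fin[OF assms(2)] by simp
  ultimately obtain x y where xy: "x \<in> \<tau> \<inter> A" "y \<in> \<tau> \<inter> A" "x \<noteq> y" by (auto simp: card_le_Suc0_iff_eq)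
  have t: "\<tau> \<in> Tri" using assms by (simp add: TH_def)
  obtain z where z: "\<tau> = {x,y,z}" "z \<noteq> x" "z \<noteq> y" "adj x z" "adj y z" using tri_third[OF t, of x y] xy by auto
  have "z \<in> A" using K1[OF assms(2), of z x y] xy z by (auto simp: adj_sym)
  hence sub: "\<tau> \<subseteq> A" using z xy by auto
  obtain e where e: "e \<in> L0" "e \<subseteq> \<tau>" using assms by (auto simp: TH_def)
  obtain a b where "e = {a,b}" "a \<noteq> b" using edge2[OF light_E[OF e(1)]] by blast
  thus False using KE[OF assms(2), of a b] e sub by auto
qed

lemma T0: assumes "\<tau> \<in> Tri" "\<tau> \<notin> TH" shows "\<exists>A\<in>K4s. \<tau> \<subseteq> A"
proof -
  obtain x y z where t: "\<tau> = {x,y,z}" "adj x y" "adj y z" "adj x z" using assms(1) tri_mem by auto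
  have s: "{x,y} \<subseteq> \<tau>" "{x,z} \<subseteq> \<tau>" using t(1) by auto
  have n1: "{x,y} \<notin> L0" "{x,z} \<notin> L0" using assms s unfolding TH_def by blast+
  obtain w where w: "adj x w" "adj y w" "w \<noteq> z" using other_vertex[OF t(2,4,3) n1(1)] by blast
  have "adj z y" using t(3) adj_sym by blast
  obtain u where u: "adj x u" "adj z u" "u \<noteq> y" using other_vertex[OF t(4,2) \<open>adj z y\<close> n1(2)] by blast
  show ?thesis
  proof (cases "u = w")
    case True
    let ?A = "{x,y,z,w}"
    have "adj z w" using u(2) True by simp
    hence "?A \<in> K4s" using t(2) t(4) w(1) t(3) w(2) by (intro clique4)
    moreover have "\<tau> \<subseteq> ?A" using t(1) by auto
    ultimately show ?thesis by blast
  next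
    case False
    show ?thesis
    proof (rule FalseE, rule gem[of x w y z u])
      show "adj w y" using w(2) adj_sym by blast
      have "x \<noteq> w" "x \<noteq> y" "x \<noteq> z" "x \<noteq> u" "w \<noteq> y" "y \<noteq> z" "z \<noteq> u"
        using t w u adj_ne by blast+
      thus "distinct [x, w, y, z, u]" using w(3) u(3) False by auto
    qed (use t w u in auto)
  qed
qed

end


context gemfree begin

lemma finE: "finite E"
proof -
  have "E \<subseteq> Pow V" using edge_sub by auto
  thus ?thesis using finV by (meson finite_Pow_iff finite_subset)
qed

lemma finL0: "finite L0" using finE by (simp add: L0_def)

lemma TH_sub: "TH \<subseteq> Tri" by (auto simp: TH_def)

lemma C1: "card Tri = card (Tri - TH) + card TH"
  using TH_sub finTri by (metis card_Diff_subset card_mono finite_subset le_add_diff_inverse2)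

lemma finK4s: "finite K4s"
proof -
  have "K4s \<subseteq> Pow V" by (auto simp: K4s_def)
  thus ?thesis using finV by (meson finite_Pow_iff finite_subset)
qed

lemma C2: "card (Tri - TH) \<le> 4 * card K4s"
proof -
  have "Tri - TH \<subseteq> (\<Union>A\<in>K4s. {\<tau>. \<tau> \<subseteq> A \<and> card \<tau> = 3})"
    using T0 tri_card by blast
  hence "card (Tri - TH) \<le> card (\<Union>A\<in>K4s. {\<tau>. \<tau> \<subseteq> A \<and> card \<tau> = 3})"
    using finK4s K4_fin by (intro card_mono) auto
  also have "\<dots> \<le> (\<Sum>A\<in>K4s. card {\<tau>. \<tau> \<subseteq> A \<and> card \<tau> = 3})"
    using finK4s by (rule card_UN_le)
  also have "\<dots> = (\<Sum>A\<in>K4s. 4)"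
  proof (rule sum.cong)
    fix A assume "A \<in> K4s"
    hence "card {\<tau>. \<tau> \<subseteq> A \<and> card \<tau> = 3} = card A choose 3"
      using K4_fin n_subsets by blast
    also have "\<dots> = 4" using \<open>A \<in> K4s\<close> by (simp add: K4s_def numeral_eq_Suc)
    finally show "card {\<tau>. \<tau> \<subseteq> A \<and> card \<tau> = 3} = 4" .
  qed simp
  finally show ?thesis by simp
qed

lemma L1': assumes "\<tau> \<in> Tri" "a \<in> \<tau>" "b \<in> \<tau>" "a \<noteq> b" "{a,b} \<in> L0"
  shows "\<exists>e\<in>L0. e \<subseteq> \<tau> \<and> e \<noteq> {a,b}"
proof -
  obtain c where c: "\<tau> = {a,b,c}" "c \<noteq> a" "c \<noteq> b" "adj a c" "adj b c" using tri_third[OF assms(1-4)] by blast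
  have "adj a b" using tri_adj[OF assms(1-4)] .
  have "adj c b" using c(5) adj_sym by blast
  from L1[OF c(4) \<open>adj c b\<close> \<open>adj a b\<close> assms(5)]
  have "{a,c} \<in> L0 \<or> {c,b} \<in> L0" .
  moreover have "{a,c} \<noteq> {a,b}" "{c,b} \<noteq> {a,b}" using c assms(4) by (auto simp: doubleton_eq_iff)
  moreover have "{a,c} \<subseteq> \<tau>" "{c,b} \<subseteq> \<tau>" using c by auto
  ultimately show ?thesis by blast
qed

definition TL where "TL = triangles V L0"

lemma TL_sub: "TL \<subseteq> TH"
proof
  fix \<tau> assume t: "\<tau> \<in> TL"
  hence "\<tau> \<in> Tri" using light_E by (auto simp: TL_def Tri_def triangles_def)
  moreover obtain x y z where "\<tau> = {x,y,z}" "x \<noteq> y" using t by (auto simp: TL_def triangles_def card_3_iff)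
  hence "{x,y} \<in> L0" "{x,y} \<subseteq> \<tau>" using t by (auto simp: TL_def triangles_def)
  ultimately show "\<tau> \<in> TH" unfolding TH_def by blast
qed

lemma C3: "2 * card TH + card TL \<le> card L0"
proof -
  define f where "f = (\<lambda>\<tau>. {e\<in>L0. e \<subseteq> \<tau>})"
  have U: "L0 = (\<Union>\<tau>\<in>TH. f \<tau>)"
  proof
    show "L0 \<subseteq> (\<Union>\<tau>\<in>TH. f \<tau>)"
    proof
      fix e assume e: "e \<in> L0"
      then obtain \<tau> where "\<tau> \<in> Tri" "e \<subseteq> \<tau>" using light_has_tri by blast
      thus "e \<in> (\<Union>\<tau>\<in>TH. f \<tau>)" using e by (auto simp: TH_def f_def)
    qed
  qed (auto simp: f_def)
  have finTH: "finite TH" using finTri TH_sub finite_subset by blast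
  have "card L0 = (\<Sum>\<tau>\<in>TH. card (f \<tau>))"
    unfolding U
  proof (rule card_UN_disjoint[OF finTH])
    show "\<forall>i\<in>TH. finite (f i)" using finL0 by (auto simp: f_def)
    show "\<forall>i\<in>TH. \<forall>j\<in>TH. i \<noteq> j \<longrightarrow> f i \<inter> f j = {}"
      using light_unique TH_sub unfolding f_def by blast
  qed
  moreover have "card (f \<tau>) \<ge> 2 + (if \<tau> \<in> TL then 1 else 0)" if t: "\<tau> \<in> TH" for \<tau>
  proof -
    have fin: "finite (f \<tau>)" using finL0 by (auto simp: f_def)
    have tT: "\<tau> \<in> Tri" using t TH_sub by blast
    obtain e where e: "e \<in> L0" "e \<subseteq> \<tau>" using t by (auto simp: TH_def)
    obtain a b where ab: "e = {a,b}" "a \<noteq> b" using edge2[OF light_E[OF e(1)]] by blast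
    show ?thesis
    proof (cases "\<tau> \<in> TL")
      case False
      obtain e' where e': "e' \<in> L0" "e' \<subseteq> \<tau>" "e' \<noteq> {a,b}" using L1'[OF tT, of a b] e ab by auto
      have "{e, e'} \<subseteq> f \<tau>" using e e' by (auto simp: f_def)
      hence "card {e,e'} \<le> card (f \<tau>)" using fin by (intro card_mono)
      thus ?thesis using False e' ab by simp
    next
      case True
      obtain x y z where xyz: "\<tau> = {x,y,z}" "x \<noteq> y" "y \<noteq> z" "x \<noteq> z"
        using True by (auto simp: TL_def triangles_def card_3_iff)
      have "{{x,y},{y,z},{x,z}} \<subseteq> f \<tau>" using True xyz by (auto simp: TL_def triangles_def f_def)
      hence "card {{x,y},{y,z},{x,z}} \<le> card (f \<tau>)" using fin by (intro card_mono)
      moreover have "card {{x,y},{y,z},{x,z}} = 3" using xyz by (auto simp: doubleton_eq_iff)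
      ultimately show ?thesis using True by simp
    qed
  qed
  hence "(\<Sum>\<tau>\<in>TH. 2 + (if \<tau> \<in> TL then 1 else 0)) \<le> (\<Sum>\<tau>\<in>TH. card (f \<tau>))"
    by (intro sum_mono) auto
  moreover have "(\<Sum>\<tau>\<in>TH. 2 + (if \<tau> \<in> TL then 1 else 0::nat)) = 2 * card TH + card TL"
  proof -
    have "(\<Sum>\<tau>\<in>TH. (if \<tau> \<in> TL then 1 else 0::nat)) = card (TH \<inter> TL)"
      using finTH by (simp add: sum.If_cases)
    also have "TH \<inter> TL = TL" using TL_sub by blast
    finally have "(\<Sum>\<tau>\<in>TH. (if \<tau> \<in> TL then 1 else 0::nat)) = card TL" .
    moreover have "(\<Sum>\<tau>\<in>TH. 2 + (if \<tau> \<in> TL then 1 else 0::nat)) = (\<Sum>\<tau>\<in>TH. 2) + (\<Sum>\<tau>\<in>TH. (if \<tau> \<in> TL then 1 else 0::nat))"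
      by (rule sum.distrib)
    ultimately show ?thesis by simp
  qed
  ultimately show ?thesis by simp
qed

end


context gemfree begin

lemma Psi:
  assumes "U \<subseteq> V"
  shows "8 * card TH \<le> card (V - U) ^ 2 + 4 * (\<Sum>w\<in>V-U. card (Nb w \<inter> U)) + 4 * card {e\<in>L0. e \<subseteq> U}"
proof -
  define W where "W = V - U"
  define LW where "LW = {e\<in>L0. e \<subseteq> W}"
  define LU where "LU = {e\<in>L0. e \<subseteq> U}"
  define X where "X = (\<Union>w\<in>W. (\<lambda>u. {w,u}) ` (Nb w \<inter> U))"
  have finW: "finite W" using finV by (simp add: W_def)
  have LWsub: "LW \<subseteq> {e. e \<subseteq> W \<and> card e = 2}" using edge_sub light_E by (auto simp: LW_def)
  have triW: "triangles W LW \<subseteq> TL"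
    unfolding TL_def by (rule tri_mono) (auto simp: W_def LW_def)
  have triW2: "triangles W LW \<subseteq> Tri"
    using triW TL_sub TH_sub by blast
  have hyp: "\<forall>e\<in>LW. card {\<tau> \<in> triangles W LW. e \<subseteq> \<tau>} \<le> 1"
  proof
    fix e assume "e \<in> LW"
    hence e: "e \<in> L0" by (simp add: LW_def)
    have "{\<tau> \<in> triangles W LW. e \<subseteq> \<tau>} \<subseteq> {\<tau> \<in> Tri. e \<subseteq> \<tau>}" using triW2 by blast
    hence "card {\<tau> \<in> triangles W LW. e \<subseteq> \<tau>} \<le> card {\<tau> \<in> Tri. e \<subseteq> \<tau>}"
      using finTri by (intro card_mono) auto
    thus "card {\<tau> \<in> triangles W LW. e \<subseteq> \<tau>} \<le> 1" using e by (simp add: L0_def)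
  qed
  have M: "4 * card LW \<le> card W ^ 2 + 4 * card (triangles W LW)"
    by (rule mantel[OF finW LWsub hyp])
  have "TL \<subseteq> Tri" using TL_sub TH_sub by (rule subset_trans)
  hence finTL: "finite TL" using finTri by (rule finite_subset)
  have "card (triangles W LW) \<le> card TL" using triW finTL by (rule card_mono[rotated])
  with M have M2: "4 * card LW \<le> card W ^ 2 + 4 * card TL" by linarith
  have cover: "L0 \<subseteq> LW \<union> LU \<union> X"
  proof
    fix e assume e: "e \<in> L0"
    obtain a b where ab: "e = {a,b}" "a \<noteq> b" "adj a b" using edge2[OF light_E[OF e]] by blast
    have V: "a \<in> V" "b \<in> V" using adj_V[OF ab(3)] by auto
    show "e \<in> LW \<union> LU \<union> X"
    proof (cases "a \<in> U")
      case aU: True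
      show ?thesis
      proof (cases "b \<in> U")
        case True thus ?thesis using aU e ab by (auto simp: LU_def)
      next
        case False
        hence "b \<in> W" "a \<in> Nb b \<inter> U" using V aU ab(3) adj_sym by (auto simp: W_def Nb_def)
        hence "e \<in> X" unfolding X_def using ab(1) by (auto simp: insert_commute)
        thus ?thesis by blast
      qed
    next
      case aW: False
      show ?thesis
      proof (cases "b \<in> U")
        case True
        hence "a \<in> W" "b \<in> Nb a \<inter> U" using V aW ab(3) by (auto simp: W_def Nb_def)
        hence "e \<in> X" unfolding X_def using ab(1) by auto
        thus ?thesis by blast
      next
        case False thus ?thesis using aW e ab V by (auto simp: LW_def W_def)
      qed
    qed
  qed
  have finX: "finite X" using finW finV by (auto simp: X_def Nb_def)
  have finLW: "finite LW" "finite LU" using finL0 by (auto simp: LW_def LU_def)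
  have "card L0 \<le> card (LW \<union> LU \<union> X)" using cover finX finLW by (intro card_mono) auto
  also have "\<dots> \<le> card LW + card LU + card X"
    by (metis add_le_mono card_Un_le le_refl order_trans)
  also have "card X \<le> (\<Sum>w\<in>W. card ((\<lambda>u. {w,u}) ` (Nb w \<inter> U)))"
    unfolding X_def using finW by (rule card_UN_le)
  also have "\<dots> \<le> (\<Sum>w\<in>W. card (Nb w \<inter> U))"
    by (intro sum_mono card_image_le) (use finV in \<open>auto simp: Nb_def\<close>)
  finally have cL: "card L0 \<le> card LW + card LU + (\<Sum>w\<in>W. card (Nb w \<inter> U))" by simp
  have "8 * card TH + 4 * card TL \<le> 4 * card L0" using C3 by linarith
  thus ?thesis using cL M2 unfolding W_def[symmetric] LU_def[symmetric] by linarith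
qed

end


context gemfree begin

lemma T_le: "card Tri \<le> 4 * card K4s + card TH" using C1 C2 by linarith

lemma tri_V: "\<tau> \<in> Tri \<Longrightarrow> \<tau> \<subseteq> V" by (auto simp: Tri_def triangles_def)

lemma choose2_le: "c \<le> 3 \<Longrightarrow> c choose 2 \<le> (3::nat)"
proof -
  assume "c \<le> 3"
  hence "c = 0 \<or> c = 1 \<or> c = 2 \<or> c = 3" by arith
  thus ?thesis by (auto simp: choose_two)
qed

lemma choose2_le1: "c \<le> 2 \<Longrightarrow> c choose 2 \<le> (1::nat)"
proof -
  assume "c \<le> 2"
  hence "c = 0 \<or> c = 1 \<or> c = 2" by arith
  thus ?thesis by (auto simp: choose_two)
qed

lemma count_w:
  assumes "\<forall>\<tau>\<in>TH. w \<in> \<tau>"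
  shows "card TH \<le> card (Nb w) choose 2"
proof -
  have finN: "finite (Nb w)" using finV by (simp add: Nb_def)
  have "TH \<subseteq> insert w ` {S. S \<subseteq> Nb w \<and> card S = 2}"
  proof
    fix \<tau> assume t: "\<tau> \<in> TH"
    hence tT: "\<tau> \<in> Tri" using TH_sub by blast
    have w: "w \<in> \<tau>" using assms t by blast
    have "\<tau> - {w} \<subseteq> Nb w" using tri_adj[OF tT w] tri_V[OF tT] by (auto simp: Nb_def)
    moreover have "card (\<tau> - {w}) = 2" using tri_card[OF tT] w by simp
    moreover have "\<tau> = insert w (\<tau> - {w})" using w by blast
    ultimately show "\<tau> \<in> insert w ` {S. S \<subseteq> Nb w \<and> card S = 2}" by blast
  qed
  hence "card TH \<le> card (insert w ` {S. S \<subseteq> Nb w \<and> card S = 2})"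
    using finN by (intro card_mono) auto
  also have "\<dots> \<le> card {S. S \<subseteq> Nb w \<and> card S = 2}" by (rule card_image_le) (use finN in auto)
  also have "\<dots> = card (Nb w) choose 2" using n_subsets[OF finN] .
  finally show ?thesis .
qed

lemma meets_w:
  assumes "\<forall>\<tau>\<in>TH. \<not> \<tau> \<subseteq> U" "V - U \<subseteq> {w}"
  shows "\<forall>\<tau>\<in>TH. w \<in> \<tau>"
proof
  fix \<tau> assume t: "\<tau> \<in> TH"
  hence "\<tau> \<subseteq> V" using tri_V TH_sub by blast
  moreover obtain v where "v \<in> \<tau>" "v \<notin> U" using assms(1) t by blast
  ultimately have "v \<in> V - U" by blast
  hence "v = w" using assms(2) by blast
  thus "w \<in> \<tau>" using \<open>v \<in> \<tau>\<close> by simp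
qed

lemma Nb_notin: "w \<notin> Nb w" using adj_ne by (auto simp: Nb_def)

lemma pigeon3:
  assumes "finite S" "card S \<ge> 3" "S \<subseteq> A \<union> B \<union> C"
    "card (S \<inter> A) \<le> 1" "card (S \<inter> B) \<le> 1" "card (S \<inter> C) \<le> 1"
  shows "\<exists>x y z. S \<inter> A = {x} \<and> S \<inter> B = {y} \<and> S \<inter> C = {z} \<and> x \<noteq> y \<and> y \<noteq> z \<and> x \<noteq> z"
proof -
  have "S = (S \<inter> A) \<union> (S \<inter> B) \<union> (S \<inter> C)" using assms(3) by blast
  hence "card S \<le> card ((S \<inter> A) \<union> (S \<inter> B)) + card (S \<inter> C)"
    by (metis card_Un_le)
  moreover have "card ((S \<inter> A) \<union> (S \<inter> B)) \<le> card (S \<inter> A) + card (S \<inter> B)" by (rule card_Un_le)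
  ultimately have "card S \<le> card (S \<inter> A) + card (S \<inter> B) + card (S \<inter> C)" by linarith
  hence c: "card (S \<inter> A) = 1" "card (S \<inter> B) = 1" "card (S \<inter> C) = 1" using assms(2,4-6) by linarith+
  then obtain x y z where xyz: "S \<inter> A = {x}" "S \<inter> B = {y}" "S \<inter> C = {z}"
    by (metis One_nat_def card_1_singletonE)
  hence "S = {x,y,z}" using \<open>S = _\<close> by auto
  have d: "x \<noteq> y \<and> y \<noteq> z \<and> x \<noteq> z"
  proof (rule ccontr)
    assume "\<not> ?thesis"
    hence "card {x,y,z} \<le> 2" by (auto simp: card_insert_if)
    thus False using assms(2) \<open>S = {x,y,z}\<close> by simp
  qed
  show ?thesis using xyz d by blast
qed

end


context gemfree begin

lemma K4_card: "A \<in> K4s \<Longrightarrow> card A = 4" by (simp add: K4s_def)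
lemma K4_V: "A \<in> K4s \<Longrightarrow> A \<subseteq> V" by (simp add: K4s_def)

lemma Tri3:
  assumes K: "A \<in> K4s" "B \<in> K4s" "C \<in> K4s"
    and m: "x \<in> A" "y \<in> B" "z \<in> C" "x \<notin> B" "x \<notin> C" "y \<notin> A" "y \<notin> C" "z \<notin> A" "z \<notin> B"
    and a: "adj x y" "adj y z" "adj x z"
  shows "12 \<le> card V"
proof -
  have d1: "A \<inter> B = {}"
  proof (rule ccontr)
    assume "A \<inter> B \<noteq> {}" then obtain p where "p \<in> A" "p \<in> B" by blast
    thus False using KX[OF K(1,2) _ _ m(1) m(4) m(2) m(6) a(1)] by blast
  qed
  have d2: "A \<inter> C = {}"
  proof (rule ccontr)
    assume "A \<inter> C \<noteq> {}" then obtain p where "p \<in> A" "p \<in> C" by blast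
    thus False using KX[OF K(1,3) _ _ m(1) m(5) m(3) m(8) a(3)] by blast
  qed
  have d3: "B \<inter> C = {}"
  proof (rule ccontr)
    assume "B \<inter> C \<noteq> {}" then obtain p where "p \<in> B" "p \<in> C" by blast
    thus False using KX[OF K(2,3) _ _ m(2) m(7) m(3) m(9) a(2)] by blast
  qed
  have f: "finite A" "finite B" "finite C" using K K4_fin by auto
  have "card (A \<union> B) = 8" using card_Un_disjoint[OF f(1,2) d1] K4_card K by simp
  moreover have "(A \<union> B) \<inter> C = {}" using d2 d3 by blast
  ultimately have "card (A \<union> B \<union> C) = 12" using card_Un_disjoint[of "A \<union> B" C] f K4_card K by simp
  moreover have "card (A \<union> B \<union> C) \<le> card V" using finV K4_V K by (intro card_mono) auto
  ultimately show ?thesis by simp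
qed

lemma card_AB: "A \<in> K4s \<Longrightarrow> B \<in> K4s \<Longrightarrow> card (A \<union> B) + card (A \<inter> B) = 8"
  using card_Un_Int[of A B] K4_fin K4_card by simp

lemma U3:
  assumes K: "A \<in> K4s" "B \<in> K4s" "C \<in> K4s" "A \<noteq> B" "A \<noteq> C" "B \<noteq> C"
  shows "10 \<le> card (A \<union> B \<union> C)"
proof -
  have f: "finite A" "finite B" "finite C" using K K4_fin by auto
  have cAB: "card (A \<union> B) + card (A \<inter> B) = 8" using card_AB K by simp
  have cABC: "card (A \<union> B \<union> C) + card ((A \<union> B) \<inter> C) = card (A \<union> B) + 4"
    using card_Un_Int[of "A \<union> B" C] f K4_card K by simp
  have i1: "card (A \<inter> B) \<le> 1" "card (A \<inter> C) \<le> 1" "card (B \<inter> C) \<le> 1" using K2 K by auto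
  have eq: "(A \<union> B) \<inter> C = (A \<inter> C) \<union> (B \<inter> C)" by blast
  have "card ((A \<union> B) \<inter> C) \<le> card (A \<inter> C) + card (B \<inter> C)" unfolding eq by (rule card_Un_le)
  hence c2: "card ((A \<union> B) \<inter> C) \<le> 2" using i1 by linarith
  show ?thesis
  proof (cases "card (A \<inter> B) = 0 \<or> card ((A \<union> B) \<inter> C) \<le> 1")
    case True
    thus ?thesis using cAB cABC c2 i1 by linarith
  next
    case False
    hence "card (A \<inter> B) = 1" "card ((A \<union> B) \<inter> C) = 2" using i1 c2 by linarith+
    then obtain p q r where p: "A \<inter> B = {p}" and qr: "(A \<union> B) \<inter> C = {q,r}" "q \<noteq> r"
      by (metis One_nat_def card_1_singletonE card_2_iff)
    have adjqr: "adj q r" using K4_adj[OF K(3)] qr by blast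
    have fin: "finite (A \<inter> C)" "finite (B \<inter> C)" using f by auto
    have nAC: "\<not> (q \<in> A \<and> r \<in> A)"
    proof
      assume "q \<in> A \<and> r \<in> A"
      hence "{q,r} \<subseteq> A \<inter> C" using qr by blast
      hence "card {q,r} \<le> card (A \<inter> C)" using fin by (intro card_mono)
      thus False using i1 qr by simp
    qed
    have nBC: "\<not> (q \<in> B \<and> r \<in> B)"
    proof
      assume "q \<in> B \<and> r \<in> B"
      hence "{q,r} \<subseteq> B \<inter> C" using qr by blast
      hence "card {q,r} \<le> card (B \<inter> C)" using fin by (intro card_mono)
      thus False using i1 qr by simp
    qed
    have qAB: "q \<in> A \<union> B" "r \<in> A \<union> B" "q \<in> C" "r \<in> C" using qr by blast+
    show ?thesis
    proof (cases "q \<in> A")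
      case True
      hence "r \<notin> A" using nAC by blast
      hence "r \<in> B" using qAB by blast
      hence "q \<notin> B" using nBC by blast
      have "p \<in> A" "p \<in> B" using p by auto
      show ?thesis using KX[OF K(1,2) \<open>p\<in>A\<close> \<open>p\<in>B\<close> True \<open>q\<notin>B\<close> \<open>r\<in>B\<close> \<open>r\<notin>A\<close> adjqr] ..
    next
      case False
      hence "q \<in> B" using qAB by blast
      hence "r \<notin> B" using nBC by blast
      hence "r \<in> A" using qAB by blast
      have "adj r q" using adjqr adj_sym by blast
      have "p \<in> A" "p \<in> B" using p by auto
      show ?thesis using KX[OF K(1,2) \<open>p\<in>A\<close> \<open>p\<in>B\<close> \<open>r\<in>A\<close> \<open>r\<notin>B\<close> \<open>q\<in>B\<close> False \<open>adj r q\<close>] ..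
    qed
  qed
qed

end


context gemfree begin

lemma Psi2:
  assumes "U \<subseteq> V" "\<And>w. w \<in> V - U \<Longrightarrow> card (Nb w \<inter> U) \<le> c"
  shows "8 * card TH \<le> card (V - U) ^ 2 + 4 * c * card (V - U) + 4 * card {e\<in>L0. e \<subseteq> U}"
proof -
  have "(\<Sum>w\<in>V-U. card (Nb w \<inter> U)) \<le> card (V - U) * c"
    using sum_bounded_above[of "V - U" "\<lambda>w. card (Nb w \<inter> U)" c] assms(2) by simp
  thus ?thesis using Psi[OF assms(1)] by (simp add: algebra_simps)
qed

lemma EU_A: assumes "A \<in> K4s" shows "{e\<in>L0. e \<subseteq> A} = {}"
proof (rule ccontr)
  assume "{e\<in>L0. e \<subseteq> A} \<noteq> {}"
  then obtain e where e: "e \<in> L0" "e \<subseteq> A" by blast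
  obtain a b where "e = {a,b}" "a \<noteq> b" using edge2[OF light_E[OF e(1)]] by blast
  thus False using KE[OF assms, of a b] e by auto
qed

lemma EU_shared: assumes "A \<in> K4s" "B \<in> K4s" "p \<in> A" "p \<in> B" shows "{e\<in>L0. e \<subseteq> A \<union> B} = {}"
proof (rule ccontr)
  assume "{e\<in>L0. e \<subseteq> A \<union> B} \<noteq> {}"
  then obtain e where e: "e \<in> L0" "e \<subseteq> A \<union> B" by blast
  obtain a b where ab: "e = {a,b}" "a \<noteq> b" "adj a b" using edge2[OF light_E[OF e(1)]] by blast
  have nA: "\<not> (a \<in> A \<and> b \<in> A)" using KE[OF assms(1), of a b] e ab by auto
  have nB: "\<not> (a \<in> B \<and> b \<in> B)" using KE[OF assms(2), of a b] e ab by auto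
  have ab2: "a \<in> A \<union> B" "b \<in> A \<union> B" using e ab by auto
  show False
  proof (cases "a \<in> A")
    case True
    hence "b \<notin> A" "b \<in> B" using nA ab2 by auto
    hence "a \<notin> B" using nB by auto
    thus False using KX[OF assms True _ \<open>b \<in> B\<close> \<open>b \<notin> A\<close> ab(3)] by blast
  next
    case False
    hence "a \<in> B" using ab2 by auto
    hence "b \<notin> B" using nB by auto
    hence "b \<in> A" using ab2 by auto
    have "adj b a" using ab(3) adj_sym by blast
    show False using KX[OF assms \<open>b \<in> A\<close> \<open>b \<notin> B\<close> \<open>a \<in> B\<close> False \<open>adj b a\<close>] .
  qed
qed

lemma EU_disj: assumes "A \<in> K4s" "B \<in> K4s" "A \<inter> B = {}" shows "card {e\<in>L0. e \<subseteq> A \<union> B} \<le> 4"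
proof -
  have "{e\<in>L0. e \<subseteq> A \<union> B} \<subseteq> (\<Union>b\<in>B. (\<lambda>a. {a,b}) ` (Nb b \<inter> A))"
  proof
    fix e assume "e \<in> {e\<in>L0. e \<subseteq> A \<union> B}"
    hence e: "e \<in> L0" "e \<subseteq> A \<union> B" by auto
    obtain a b where ab: "e = {a,b}" "a \<noteq> b" "adj a b" using edge2[OF light_E[OF e(1)]] by blast
    have nA: "\<not> (a \<in> A \<and> b \<in> A)" using KE[OF assms(1), of a b] e ab by auto
    have nB: "\<not> (a \<in> B \<and> b \<in> B)" using KE[OF assms(2), of a b] e ab by auto
    have ab2: "a \<in> A \<union> B" "b \<in> A \<union> B" using e ab by auto
    have V: "a \<in> V" "b \<in> V" using adj_V[OF ab(3)] by auto
    show "e \<in> (\<Union>b\<in>B. (\<lambda>a. {a,b}) ` (Nb b \<inter> A))"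
    proof (cases "a \<in> A")
      case True
      hence "b \<in> B" using nA ab2 by auto
      moreover have "a \<in> Nb b \<inter> A" using True ab(3) adj_sym V by (auto simp: Nb_def)
      ultimately show ?thesis using ab(1) by blast
    next
      case False
      hence "a \<in> B" "b \<in> A" using ab2 nB by auto
      moreover have "b \<in> Nb a \<inter> A" using \<open>b \<in> A\<close> ab(3) V by (auto simp: Nb_def)
      ultimately show ?thesis using ab(1) by (auto simp: insert_commute)
    qed
  qed
  hence "card {e\<in>L0. e \<subseteq> A \<union> B} \<le> card (\<Union>b\<in>B. (\<lambda>a. {a,b}) ` (Nb b \<inter> A))"
    using K4_fin[OF assms(1)] K4_fin[OF assms(2)] by (intro card_mono) auto
  also have "\<dots> \<le> (\<Sum>b\<in>B. card ((\<lambda>a. {a,b}) ` (Nb b \<inter> A)))"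
    using K4_fin[OF assms(2)] by (rule card_UN_le)
  also have "\<dots> \<le> (\<Sum>b\<in>B. 1)"
  proof (rule sum_mono)
    fix b assume "b \<in> B"
    hence "b \<notin> A" using assms(3) by blast
    have "card ((\<lambda>a. {a,b}) ` (Nb b \<inter> A)) \<le> card (Nb b \<inter> A)"
      using K4_fin[OF assms(1)] by (intro card_image_le) auto
    also have "\<dots> \<le> 1" using K1card[OF assms(1) \<open>b \<notin> A\<close>] .
    finally show "card ((\<lambda>a. {a,b}) ` (Nb b \<inter> A)) \<le> 1" .
  qed
  also have "\<dots> = 4" using K4_card[OF assms(2)] by simp
  finally show ?thesis .
qed

end


context gemfree begin

lemma NbU2: assumes "A \<in> K4s" "B \<in> K4s" "w \<notin> A \<union> B" shows "card (Nb w \<inter> (A \<union> B)) \<le> 2"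
proof -
  have "Nb w \<inter> (A \<union> B) = (Nb w \<inter> A) \<union> (Nb w \<inter> B)" by blast
  hence "card (Nb w \<inter> (A \<union> B)) \<le> card (Nb w \<inter> A) + card (Nb w \<inter> B)" by (metis card_Un_le)
  thus ?thesis using K1card[OF assms(1)] K1card[OF assms(2)] assms(3) by fastforce
qed

lemma NbU3: assumes "A \<in> K4s" "B \<in> K4s" "C \<in> K4s" "w \<notin> A \<union> B \<union> C" shows "card (Nb w \<inter> (A \<union> B \<union> C)) \<le> 3"
proof -
  have "Nb w \<inter> (A \<union> B \<union> C) = (Nb w \<inter> (A \<union> B)) \<union> (Nb w \<inter> C)" by blast
  hence "card (Nb w \<inter> (A \<union> B \<union> C)) \<le> card (Nb w \<inter> (A \<union> B)) + card (Nb w \<inter> C)" by (metis card_Un_le)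
  thus ?thesis using NbU2[OF assms(1,2)] K1card[OF assms(3)] assms(4) by fastforce
qed

lemma case0: assumes "card K4s = 0" shows "8 * card Tri \<le> card V ^ 2"
proof -
  have "{} \<notin> L0" using light_E edge_sub by fastforce
  hence e: "{e\<in>L0. e \<subseteq> {}} = {}" by auto
  have "8 * card TH \<le> card (V - {}) ^ 2 + 4 * 0 * card (V - {}) + 4 * card {e\<in>L0. e \<subseteq> {}}"
    by (rule Psi2) auto
  hence "8 * card TH \<le> card V ^ 2" unfolding e by simp
  thus ?thesis using T_le assms by simp
qed

lemma case1: assumes "card K4s = 1" "card V = n" "9 \<le> n" shows "8 * card Tri \<le> n ^ 2"
proof -
  obtain A where A: "K4s = {A}" using assms(1) by (metis One_nat_def card_1_singletonE)
  hence AK: "A \<in> K4s" by simp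
  have "8 * card TH \<le> card (V - A) ^ 2 + 4 * 1 * card (V - A) + 4 * card {e\<in>L0. e \<subseteq> A}"
    using Psi2[OF K4_V[OF AK], of 1] K1card[OF AK] by simp
  moreover have "card (V - A) = n - 4" using K4_V[OF AK] K4_card[OF AK] assms(2) K4_fin[OF AK]
    by (simp add: card_Diff_subset)
  ultimately have h: "8 * card TH \<le> (n - 4) ^ 2 + 4 * (n - 4)" using EU_A[OF AK] by simp
  define m where "m = n - 4"
  have n: "n = m + 4" using assms(3) m_def by simp
  have "n ^ 2 = m ^ 2 + 8 * m + 16" unfolding n by (simp add: power2_eq_square algebra_simps)
  moreover have "card Tri \<le> 4 + card TH" using T_le assms(1) by simp
  moreover have "8 * card TH \<le> m ^ 2 + 4 * m" using h unfolding m_def[symmetric] .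
  moreover have "m \<ge> 5" using assms(3) m_def by simp
  ultimately show ?thesis by linarith
qed

end


context gemfree begin

lemma direct_w:
  assumes "U \<subseteq> V" "V - U = {w}" "\<forall>\<tau>\<in>TH. \<not> \<tau> \<subseteq> U"
  shows "card TH \<le> card (Nb w \<inter> U) choose 2"
proof -
  have all: "\<forall>\<tau>\<in>TH. w \<in> \<tau>" using meets_w[OF assms(3)] assms(2) by simp
  have "Nb w \<subseteq> U"
  proof
    fix x assume x: "x \<in> Nb w"
    hence "x \<in> V" "x \<noteq> w" using Nb_notin by (auto simp: Nb_def)
    thus "x \<in> U" using assms(2) by blast
  qed
  hence "Nb w \<inter> U = Nb w" by blast
  thus ?thesis using count_w[OF all] by simp
qed

lemma case2: assumes "card K4s = 2" "card V = n" "9 \<le> n" "n \<le> 11" shows "8 * card Tri \<le> n ^ 2"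
proof -
  obtain A B where AB: "K4s = {A,B}" "A \<noteq> B" using assms(1) by (meson card_2_iff)
  hence K: "A \<in> K4s" "B \<in> K4s" by auto
  have T: "card Tri \<le> 8 + card TH" using T_le assms(1) by simp
  have UV: "A \<union> B \<subseteq> V" using K4_V K by auto
  have finU: "finite (A \<union> B)" using K4_fin K by auto
  have cVU: "card (V - (A \<union> B)) = n - card (A \<union> B)" using UV finU assms(2) by (simp add: card_Diff_subset)
  have cAB: "card (A \<union> B) + card (A \<inter> B) = 8" using card_AB K by simp
  have i1: "card (A \<inter> B) \<le> 1" using K2 K AB by simp
  have Nb2: "\<And>w. w \<in> V - (A \<union> B) \<Longrightarrow> card (Nb w \<inter> (A \<union> B)) \<le> 2" using NbU2 K by blast
  have P: "8 * card TH \<le> card (V - (A \<union> B)) ^ 2 + 4 * 2 * card (V - (A \<union> B)) + 4 * card {e\<in>L0. e \<subseteq> A \<union> B}"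
    by (rule Psi2[OF UV Nb2])
  show ?thesis
  proof (cases "A \<inter> B = {}")
    case False
    then obtain p where p: "p \<in> A" "p \<in> B" by blast
    have "card (A \<inter> B) \<noteq> 0" using False K4_fin K by auto
    hence "card (A \<union> B) = 7" using cAB i1 by linarith
    hence m: "card (V - (A \<union> B)) = n - 7" using cVU by simp
    have "8 * card TH \<le> (n - 7) ^ 2 + 8 * (n - 7)" using P EU_shared[OF K p] m by simp
    moreover have "n = 9 \<or> n = 10 \<or> n = 11" using assms(3,4) by arith
    ultimately show ?thesis using T by (auto; presburger)
  next
    case True
    hence "card (A \<union> B) = 8" using cAB by simp
    hence m: "card (V - (A \<union> B)) = n - 8" using cVU by simp
    show ?thesis
    proof (cases "n = 9")
      case False
      have "8 * card TH \<le> (n - 8) ^ 2 + 8 * (n - 8) + 16" using P EU_disj[OF K True] m by simp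
      moreover have "n = 10 \<or> n = 11" using assms(3,4) False by arith
      ultimately show ?thesis using T by auto
    next
      case n9: True
      hence "card (V - (A \<union> B)) = 1" using m by simp
      then obtain w where w: "V - (A \<union> B) = {w}" by (metis One_nat_def card_1_singletonE)
      have "\<forall>\<tau>\<in>TH. \<not> \<tau> \<subseteq> A \<union> B"
      proof (intro ballI notI)
        fix \<tau> assume t: "\<tau> \<in> TH" "\<tau> \<subseteq> A \<union> B"
        have "\<tau> = (\<tau> \<inter> A) \<union> (\<tau> \<inter> B)" using t(2) by blast
        hence "card \<tau> \<le> card (\<tau> \<inter> A) + card (\<tau> \<inter> B)" by (metis card_Un_le)
        moreover have "card \<tau> = 3" using tri_card t(1) TH_sub by blast
        ultimately show False using HK[OF t(1) K(1)] HK[OF t(1) K(2)] by linarith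
      qed
      hence "card TH \<le> card (Nb w \<inter> (A \<union> B)) choose 2" using direct_w[OF UV w] by blast
      moreover have "card (Nb w \<inter> (A \<union> B)) \<le> 2" using Nb2 w by blast
      ultimately have "card TH \<le> 1" using choose2_le1 le_trans by blast
      thus ?thesis using T n9 by simp
    qed
  qed
qed

end


context gemfree begin

lemma K4s_diff_ne: assumes "finite X" "card X < card K4s" shows "K4s - X \<noteq> {}"
proof
  assume "K4s - X = {}"
  hence "K4s \<subseteq> X" by blast
  hence "card K4s \<le> card X" by (rule card_mono[OF assms(1)])
  thus False using assms(2) by simp
qed

lemma sing1: "S \<inter> X = {x} \<Longrightarrow> x \<in> S \<and> x \<in> X" by blast
lemma sing2: "S \<inter> X = {y} \<Longrightarrow> x \<in> S \<Longrightarrow> x \<in> X \<Longrightarrow> x = y" by blast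

lemma noU3:
  assumes K: "A \<in> K4s" "B \<in> K4s" "C \<in> K4s" and n: "card V \<le> 11"
  shows "\<forall>\<tau>\<in>TH. \<not> \<tau> \<subseteq> A \<union> B \<union> C"
proof (intro ballI notI)
  fix \<tau> assume t: "\<tau> \<in> TH" "\<tau> \<subseteq> A \<union> B \<union> C"
  have tT: "\<tau> \<in> Tri" using t(1) TH_sub by blast
  have c3: "3 \<le> card \<tau>" using tri_card[OF tT] by simp
  have "\<exists>x y z. \<tau> \<inter> A = {x} \<and> \<tau> \<inter> B = {y} \<and> \<tau> \<inter> C = {z} \<and> x \<noteq> y \<and> y \<noteq> z \<and> x \<noteq> z"
    by (rule pigeon3[OF tri_fin[OF tT] c3 t(2) HK[OF t(1) K(1)] HK[OF t(1) K(2)] HK[OF t(1) K(3)]])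
  then obtain x y z where xyz: "\<tau> \<inter> A = {x}" "\<tau> \<inter> B = {y}" "\<tau> \<inter> C = {z}" "x \<noteq> y" "y \<noteq> z" "x \<noteq> z"
    by blast
  have inT: "x \<in> \<tau>" "y \<in> \<tau>" "z \<in> \<tau>" using sing1[OF xyz(1)] sing1[OF xyz(2)] sing1[OF xyz(3)] by auto
  have m: "x \<in> A" "y \<in> B" "z \<in> C" "x \<notin> B" "x \<notin> C" "y \<notin> A" "y \<notin> C" "z \<notin> A" "z \<notin> B"
    using sing1[OF xyz(1)] sing1[OF xyz(2)] sing1[OF xyz(3)] sing2[OF xyz(1)] sing2[OF xyz(2)] sing2[OF xyz(3)] inT xyz(4-6)
    by metis+
  have a: "adj x y" "adj y z" "adj x z" using tri_adj[OF tT] inT xyz(4-6) by auto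
  show False using Tri3[OF K m a] n by simp
qed

lemma case4: assumes "card K4s \<ge> 4" "card V \<le> 11" shows False
proof -
  obtain A where A: "A \<in> K4s" using K4s_diff_ne[of "{}"] assms(1) by auto
  have "card {A} < card K4s" using assms(1) by simp
  then obtain B where B: "B \<in> K4s" "B \<noteq> A" using K4s_diff_ne[of "{A}"] by auto
  have "card {A,B} \<le> 2" by (simp add: card_insert_if)
  hence "card {A,B} < card K4s" using assms(1) by simp
  then obtain C where C: "C \<in> K4s" "C \<noteq> A" "C \<noteq> B" using K4s_diff_ne[of "{A,B}"] by auto
  have "card {A,B,C} \<le> 3" by (simp add: card_insert_if)
  hence "card {A,B,C} < card K4s" using assms(1) by simp
  then obtain D where D: "D \<in> K4s" "D \<noteq> A" "D \<noteq> B" "D \<noteq> C" using K4s_diff_ne[of "{A,B,C}"] by auto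
  define U where "U = A \<union> B \<union> C"
  have cU: "10 \<le> card U" unfolding U_def using U3[OF A B(1) C(1)] B C by auto
  have UV: "U \<subseteq> V" using K4_V A B C by (auto simp: U_def)
  have finU: "finite U" using finV UV finite_subset by blast
  have "card (V - U) = card V - card U" using UV finU by (simp add: card_Diff_subset)
  hence c1: "card (V - U) \<le> 1" using cU assms(2) by linarith
  have "D - U \<subseteq> V - U" using K4_V[OF D(1)] by blast
  hence "card (D - U) \<le> card (V - U)" using finV by (intro card_mono) auto
  moreover have "card (D \<inter> U) + card (D - U) = 4" using K4_card[OF D(1)] K4_fin[OF D(1)]
    by (metis card_Int_Diff inf_commute)
  ultimately have c3: "card (D \<inter> U) \<ge> 3" using c1 by linarith
  have finS: "finite (D \<inter> U)" using finU by simp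
  have h: "card (D \<inter> U \<inter> X) \<le> 1" if "X \<in> K4s" "X \<noteq> D" for X
  proof -
    have "card (D \<inter> U \<inter> X) \<le> card (D \<inter> X)" using K4_fin[OF D(1)] by (intro card_mono) auto
    moreover have "D \<noteq> X" using that(2) by simp
    ultimately show ?thesis using K2[OF D(1) that(1)] by simp
  qed
  obtain x y z where xyz: "D \<inter> U \<inter> A = {x}" "D \<inter> U \<inter> B = {y}" "D \<inter> U \<inter> C = {z}" "x \<noteq> y" "y \<noteq> z" "x \<noteq> z"
  proof -
    have sub: "D \<inter> U \<subseteq> A \<union> B \<union> C" by (auto simp: U_def)
    have "\<exists>x y z. D \<inter> U \<inter> A = {x} \<and> D \<inter> U \<inter> B = {y} \<and> D \<inter> U \<inter> C = {z} \<and> x \<noteq> y \<and> y \<noteq> z \<and> x \<noteq> z"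
      using D by (intro pigeon3[OF finS c3 sub h[OF A] h[OF B(1)] h[OF C(1)]]) auto
    thus ?thesis using that by blast
  qed
  have inS: "x \<in> D \<inter> U" "y \<in> D \<inter> U" "z \<in> D \<inter> U" using sing1[OF xyz(1)] sing1[OF xyz(2)] sing1[OF xyz(3)] by auto
  have m: "x \<in> A" "y \<in> B" "z \<in> C" "x \<notin> B" "x \<notin> C" "y \<notin> A" "y \<notin> C" "z \<notin> A" "z \<notin> B"
    using sing1[OF xyz(1)] sing1[OF xyz(2)] sing1[OF xyz(3)] sing2[OF xyz(1)] sing2[OF xyz(2)] sing2[OF xyz(3)] inS xyz(4-6)
    by metis+
  have inD: "x \<in> D" "y \<in> D" "z \<in> D" using inS by auto
  have a: "adj x y" "adj y z" "adj x z" using K4_adj[OF D(1)] inD xyz(4-6) by auto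
  show False using Tri3[OF A B(1) C(1) m a] assms(2) by simp
qed

lemma case3: assumes "card K4s = 3" "card V = n" "n \<le> 11" shows "8 * card Tri \<le> n ^ 2"
proof -
  obtain A B C where ABC: "K4s = {A,B,C}" "A \<noteq> B" "B \<noteq> C" "A \<noteq> C" using assms(1) by (meson card_3_iff)
  hence K: "A \<in> K4s" "B \<in> K4s" "C \<in> K4s" by auto
  have T: "card Tri \<le> 12 + card TH" using T_le assms(1) by simp
  define U where "U = A \<union> B \<union> C"
  have cU: "10 \<le> card U" unfolding U_def using U3[OF K] ABC by auto
  have UV: "U \<subseteq> V" using K4_V K by (auto simp: U_def)
  have finU: "finite U" using finV UV finite_subset by blast
  have cVU: "card (V - U) = n - card U" using UV finU assms(2) by (simp add: card_Diff_subset)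
  have "card U \<le> n" using UV finV assms(2) card_mono by blast
  have noU: "\<forall>\<tau>\<in>TH. \<not> \<tau> \<subseteq> U" using noU3[OF K] assms(2,3) by (simp add: U_def)
  show ?thesis
  proof (cases "V - U = {}")
    case True
    have "TH = {}"
    proof (rule ccontr)
      assume "TH \<noteq> {}"
      then obtain \<tau> where t: "\<tau> \<in> TH" by blast
      hence "\<tau> \<subseteq> V" using tri_V TH_sub by blast
      hence "\<tau> \<subseteq> U" using True by blast
      thus False using noU t by blast
    qed
    hence "card Tri \<le> 12" using T by simp
    moreover have "10 \<le> n" using cU \<open>card U \<le> n\<close> by linarith
    moreover have "(10::nat) ^ 2 \<le> n ^ 2" using \<open>10 \<le> n\<close> by (rule power_mono) simp
    ultimately show ?thesis by simp
  next
    case False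
    hence "card (V - U) \<noteq> 0" using finV by simp
    hence "card (V - U) = 1" using cVU cU assms(3) by linarith
    then obtain w where w: "V - U = {w}" by (metis One_nat_def card_1_singletonE)
    have n11: "n = 11" using cVU cU assms(3) \<open>card (V - U) = 1\<close> by linarith
    have "card TH \<le> card (Nb w \<inter> U) choose 2" using direct_w[OF UV w noU] .
    moreover have "card (Nb w \<inter> U) \<le> 3" unfolding U_def by (rule NbU3[OF K]) (use w in \<open>auto simp: U_def\<close>)
    ultimately have "card TH \<le> 3" using choose2_le le_trans by blast
    thus ?thesis using T n11 by simp
  qed
qed

lemma main: assumes "card V = n" "9 \<le> n" "n \<le> 11" shows "8 * card Tri \<le> n ^ 2"
proof -
  consider "card K4s = 0" | "card K4s = 1" | "card K4s = 2" | "card K4s = 3" | "card K4s \<ge> 4" by arith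
  thus ?thesis
  proof cases
    case 1 thus ?thesis using case0 assms(1) by simp
  next
    case 2 thus ?thesis using case1 assms by simp
  next
    case 3 thus ?thesis using case2 assms by simp
  next
    case 4 thus ?thesis using case3 assms by simp
  next
    case 5 thus ?thesis using case4 assms by simp
  qed
qed

end

theorem theorem2:
  fixes V :: "'a set" and E :: "'a set set" and n t :: nat
  assumes "(n, t) \<in> {(9, 11), (10, 13), (11, 16)}"
    and "simple_graph V E" and "card V = n"
    and "card (triangles V E) \<ge> t"
  shows "contains_subgraph {0..4::nat} susp_P4_edges V E"
proof (rule ccontr)
  assume ng: "\<not> contains_subgraph {0..4::nat} susp_P4_edges V E"
  interpret g: gemfree V E using assms(2) ng by unfold_locales
  have n: "9 \<le> n" "n \<le> 11" using assms(1) by auto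
  have "8 * card (triangles V E) \<le> n ^ 2" using g.main[OF assms(3) n] by (simp add: g.Tri_def)
  moreover have "n ^ 2 < 8 * t" using assms(1) by auto
  ultimately show False using assms(4) by linarith
qed



end
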